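(* Let $p(z,w)=(z-w)^2$. For every $n\ge 0$ and every $k=0,1,\dots,n$, \[ A^n_{n,k}=-\frac{(n+2)(n+3)}{12}\,(k+1)(k+2)(k-n-1). \]
   Context: For a homogeneous polynomial $p(z,w)$ and $n\ge 0$, let $A^n=(a_{i,j})_{i,j=0}^n$ be the $(n+1)\times(n+1)$ matrix with $a_{i,j}=\langle p w^{i-j},p z^{i-j}\rangle$ for $i\ge j$ and $a_{i,j}=\overline{\langle p w^{j-i},p z^{j-i}\rangle}$ for $i<j$, the inner product being that of the Hardy space $H^2(\mathbb D^2)$ (in which the monomials $z^aw^b$ are orthonormal). Let $A^n_{i,j}$ denote the $(i,j)$ cofactor of $A^n$, i.e. $(-1)^{i+j}$ times the determinant of the matrix obtained from $A^n$ by deleting row $i$ and column $j$ (rows and columns indexed $0,\dots,n$; for $n=0$, $A^0_{0,0}=1$). For $p=(z-w)^2$, $A^n$ is the symmetric pentadiagonal Toeplitz matrix with diagonal entries $6$, first off-diagonal entries $-4$, second off-diagonal entries $1$, and all other entries $0$. *)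

theory Defs
  imports "HOL-Analysis.Analysis" "Jordan_Normal_Form.Determinant"
begin

text \<open>A polynomial in two variables z, w is represented by its coefficient function:
  f (a,b) is the coefficient of z^a w^b.\<close>
type_synonym poly2 = "nat \<times> nat \<Rightarrow> complex"

text \<open>Inner product of the Hardy space H^2 of the bidisc: monomials are orthonormal.\<close>
definition hardy_inner :: "poly2 \<Rightarrow> poly2 \<Rightarrow> complex" where
  "hardy_inner f g = (\<Sum>\<^sub>\<infinity>x\<in>UNIV. f x * cnj (g x))"

definition mult_monom :: "nat \<Rightarrow> nat \<Rightarrow> poly2 \<Rightarrow> poly2" where
  "mult_monom a b f = (\<lambda>(c,d). if a \<le> c \<and> b \<le> d then f (c - a, d - b) else 0)"

definition p_sq :: poly2 where
  "p_sq = (\<lambda>(a,b). if (a,b) = (2,0) then 1 else if (a,b) = (1,1) then -2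
                    else if (a,b) = (0,2) then 1 else 0)"

definition Amat :: "poly2 \<Rightarrow> nat \<Rightarrow> complex mat" where
  "Amat p n = mat (n+1) (n+1) (\<lambda>(i,j).
     if j \<le> i then hardy_inner (mult_monom 0 (i-j) p) (mult_monom (i-j) 0 p)
     else cnj (hardy_inner (mult_monom 0 (j-i) p) (mult_monom (j-i) 0 p)))"

end

theory Submission imports Defs begin

lemma hardy_fin: assumes "finite S" "\<And>x. x \<notin> S \<Longrightarrow> f x * cnj (g x) = 0"
  shows "hardy_inner f g = (\<Sum>x\<in>S. f x * cnj (g x))"
  unfolding hardy_inner_def
  by (subst infsum_cong_neutral[where T=S and g="\<lambda>x. f x * cnj (g x)"]) (use assms in auto)

lemma inner_entries: "hardy_inner (mult_monom 0 d p_sq) (mult_monom d 0 p_sq) =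
  (if d = 0 then 6 else if d = 1 then -4 else if d = 2 then 1 else 0)"
proof -
  have en: "{..2::nat}\<times>{..2::nat} = {(0,0),(0,1),(0,2),(1,0),(1,1),(1,2),(2,0),(2,1),(2,2)}" by auto
  have "hardy_inner (mult_monom 0 d p_sq) (mult_monom d 0 p_sq) =
     (\<Sum>x\<in>{..2::nat}\<times>{..2::nat}. mult_monom 0 d p_sq x * cnj (mult_monom d 0 p_sq x))"
    by (rule hardy_fin) (auto simp: mult_monom_def p_sq_def split: if_splits)
  also have "\<dots> = (if d = 0 then 6 else if d = 1 then -4 else if d = 2 then 1 else 0)"
  proof -
    consider "d = 0" | "d = 1" | "d = 2" | "d \<ge> 3" by linarith
    then show ?thesis
    proof cases
      case 4
      then show ?thesis by (auto simp: mult_monom_def p_sq_def intro!: sum.neutral)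
    qed (simp_all add: mult_monom_def p_sq_def en)
  qed
  finally show ?thesis .
qed

definition er :: "nat \<Rightarrow> nat \<Rightarrow> real" where
  "er i k = (if k = i then 6 else 0) + (if k = i+1 then -4 else 0) + (if k+1 = i then -4 else 0)
     + (if k = i+2 then 1 else 0) + (if k+2 = i then 1 else 0)"

lemma Amat_carrier: "Amat p_sq n \<in> carrier_mat (n+1) (n+1)"
  by (simp add: Amat_def)

lemma Amat_entry: assumes "i \<le> n" "j \<le> n" shows "Amat p_sq n $$ (i,j) = complex_of_real (er i j)"
proof -
  have "Amat p_sq n $$ (i,j) = (if j \<le> i then hardy_inner (mult_monom 0 (i-j) p_sq) (mult_monom (i-j) 0 p_sq)
     else cnj (hardy_inner (mult_monom 0 (j-i) p_sq) (mult_monom (j-i) 0 p_sq)))"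
    using assms by (simp add: Amat_def)
  then show ?thesis
    unfolding inner_entries er_def
    by (cases "j \<le> i") (auto split: if_splits)
qed

definition Yr :: "real \<Rightarrow> real \<Rightarrow> real" where
  "Yr n x = - ((n+2)*(n+3)/12) * (x+1)*(x+2)*(x-n-1)"

definition fD :: "real \<Rightarrow> real" where
  "fD n = (n+2)*(n+3)^2*(n+4)/12"

lemma sum_delta1: "(\<Sum>k\<in>{0..<Suc n}. (if k = t then g k else 0::real)) = (if t \<le> n then g t else 0)"
  by (simp add: sum.delta')

lemma sum_delta2: "(\<Sum>k\<in>{0..<Suc n}. (if k + d = i then g k else 0::real)) = (if d \<le> i \<and> i - d \<le> n then g (i-d) else 0)"
proof (cases "d \<le> i")
  case True
  then have "\<And>k. (k + d = i) = (k = i - d)" by auto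
  then show ?thesis using True by (simp add: sum.delta')
next
  case False
  then show ?thesis by (auto intro!: sum.neutral)
qed

lemma band_sum:
  fixes g :: "nat \<Rightarrow> real"
  assumes "i \<le> n"
  shows "(\<Sum>k\<in>{0..<Suc n}. er i k * g k) =
    6 * g i + (if i+1 \<le> n then -4 * g (i+1) else 0) + (if i \<ge> 1 then -4 * g (i-1) else 0)
    + (if i+2 \<le> n then g (i+2) else 0) + (if i \<ge> 2 then g (i-2) else 0)"
proof -
  have "\<And>k. er i k * g k = (if k = i then 6 * g k else 0) + (if k = i+1 then -4 * g k else 0)
     + (if k + 1 = i then -4 * g k else 0)
     + (if k = i+2 then g k else 0) + (if k + 2 = i then g k else 0)"
    unfolding er_def by (simp add: distrib_right)
  then have "(\<Sum>k\<in>{0..<Suc n}. er i k * g k) = (\<Sum>k\<in>{0..<Suc n}. (if k = i then 6 * g k else 0)) + (\<Sum>k\<in>{0..<Suc n}. (if k = i+1 then -4 * g k else 0))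
     + (\<Sum>k\<in>{0..<Suc n}. (if k + 1 = i then -4 * g k else 0))
     + (\<Sum>k\<in>{0..<Suc n}. (if k = i+2 then g k else 0)) + (\<Sum>k\<in>{0..<Suc n}. (if k + 2 = i then g k else 0))"
    by (simp only: sum.distrib)
  also have "\<dots> = 6 * g i + (if i+1 \<le> n then -4 * g (i+1) else 0) + (if i \<ge> 1 then -4 * g (i-1) else 0)
    + (if i+2 \<le> n then g (i+2) else 0) + (if i \<ge> 2 then g (i-2) else 0)"
    unfolding sum_delta1[where g="\<lambda>k. 6 * g k"] sum_delta1[where g="\<lambda>k. -4 * g k"] sum_delta1[where g=g]
       sum_delta2[where g="\<lambda>k. -4 * g k"] sum_delta2[where g=g]
    using assms by auto
  finally show ?thesis .
qed


lemma Yr_id: "6 * Yr n x - 4 * Yr n (x+1) - 4 * Yr n (x-1) + Yr n (x+2) + Yr n (x-2) = 0"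
  unfolding Yr_def by (simp add: field_simps)

lemma L1:
  assumes "i \<le> n"
  shows "(\<Sum>k\<in>{0..<Suc n}. er i k * Yr (real n) (real k)) = (if i = n then fD (real n) else 0)"
proof -
  let ?Y = "Yr (real n)"
  have a: "(if i+1 \<le> n then -4 * ?Y (real (i+1)) else 0) = -4 * ?Y (real i + 1)"
    using assms by (auto simp: Yr_def)
  have b: "(if i \<ge> 1 then -4 * ?Y (real (i-1)) else 0) = -4 * ?Y (real i - 1)"
    by (auto simp: Yr_def of_nat_diff)
  have c: "(if i \<ge> 2 then ?Y (real (i-2)) else 0) = ?Y (real i - 2)"
  proof (cases "i \<ge> 2")
    case False
    then have "i = 0 \<or> i = 1" by auto
    then show ?thesis using False by (auto simp: Yr_def)
  qed (simp add: of_nat_diff)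
  have d: "(if i+2 \<le> n then ?Y (real (i+2)) else 0) = ?Y (real i + 2) - (if i = n then ?Y (real n + 2) else 0)"
  proof (cases "i+2 \<le> n")
    case False
    then have "i + 1 = n \<or> i = n" using assms by auto
    then show ?thesis using False by (auto simp: Yr_def)
  qed (simp add: add.commute)
  have "(\<Sum>k\<in>{0..<Suc n}. er i k * ?Y (real k)) =
    6 * ?Y (real i) - 4 * ?Y (real i + 1) - 4 * ?Y (real i - 1) + ?Y (real i + 2) + ?Y (real i - 2)
     - (if i = n then ?Y (real n + 2) else 0)"
    unfolding band_sum[OF assms] using a b c d by simp
  also have "\<dots> = (if i = n then fD (real n) else 0)"
    using Yr_id[of "real n" "real i"] by (simp add: Yr_def fD_def field_simps power2_eq_square)
  finally show ?thesis .
qed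

definition Y :: "nat \<Rightarrow> nat \<Rightarrow> complex" where
  "Y n k = complex_of_real (Yr (real n) (real k))"

lemma Ay: "Amat p_sq n *\<^sub>v vec (Suc n) (Y n) = complex_of_real (fD (real n)) \<cdot>\<^sub>v unit_vec (Suc n) n"
proof (rule eq_vecI)
  show "dim_vec (Amat p_sq n *\<^sub>v vec (Suc n) (Y n)) = dim_vec (complex_of_real (fD (real n)) \<cdot>\<^sub>v unit_vec (Suc n) n)"
    using Amat_carrier[of n] by simp
next
  fix i assume "i < dim_vec (complex_of_real (fD (real n)) \<cdot>\<^sub>v unit_vec (Suc n) n)"
  then have i: "i < Suc n" by simp
  have "(Amat p_sq n *\<^sub>v vec (Suc n) (Y n)) $ i = (\<Sum>k\<in>{0..<Suc n}. Amat p_sq n $$ (i,k) * Y n k)"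
    using i Amat_carrier[of n] by (auto simp: scalar_prod_def intro!: sum.cong)
  also have "\<dots> = (\<Sum>k\<in>{0..<Suc n}. complex_of_real (er i k * Yr (real n) (real k)))"
    using i by (intro sum.cong) (auto simp: Amat_entry Y_def)
  also have "\<dots> = complex_of_real (if i = n then fD (real n) else 0)"
    unfolding of_real_sum[symmetric] using L1[of i n] i by simp
  also have "\<dots> = (complex_of_real (fD (real n)) \<cdot>\<^sub>v unit_vec (Suc n) n) $ i"
    using i by simp
  finally show "(Amat p_sq n *\<^sub>v vec (Suc n) (Y n)) $ i = (complex_of_real (fD (real n)) \<cdot>\<^sub>v unit_vec (Suc n) n) $ i" .
qed

lemma sum_ind1: "i < (N::nat) \<Longrightarrow> (\<Sum>ia = 0..<N. c * (if i = ia then 1 else 0) * f ia) = c * (f i :: 'a :: comm_ring_1)"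
proof -
  assume i: "i < N"
  have "(\<Sum>ia = 0..<N. c * (if i = ia then 1 else 0) * f ia) = (\<Sum>ia = 0..<N. if i = ia then c * f ia else 0)"
    by (rule sum.cong) auto
  also have "\<dots> = c * f i" using i by (simp add: sum.delta')
  finally show ?thesis .
qed

lemma sum_ind2: "n < (N::nat) \<Longrightarrow> (\<Sum>i = 0..<N. g i * (c * (if i = n then 1 else 0))) = c * (g n :: 'a :: comm_ring_1)"
proof -
  assume i: "n < N"
  have "(\<Sum>i = 0..<N. g i * (c * (if i = n then 1 else 0))) = (\<Sum>i = 0..<N. if n = i then c * g i else 0)"
    by (rule sum.cong) auto
  also have "\<dots> = c * g n" using i by (simp add: sum.delta')
  finally show ?thesis .
qed

lemma smult_one_mat_vec: "v \<in> carrier_vec N \<Longrightarrow> (c \<cdot>\<^sub>m 1\<^sub>m N) *\<^sub>v v = c \<cdot>\<^sub>v (v :: 'a :: comm_ring_1 vec)"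
  by (intro eq_vecI) (auto simp: scalar_prod_def row_def sum_ind1)

lemma adjv:
  fixes A :: "'a :: comm_ring_1 mat"
  assumes A: "A \<in> carrier_mat N N" and v: "v \<in> carrier_vec N"
  shows "adj_mat A *\<^sub>v (A *\<^sub>v v) = det A \<cdot>\<^sub>v v"
proof -
  have "adj_mat A *\<^sub>v (A *\<^sub>v v) = (adj_mat A * A) *\<^sub>v v"
    using assoc_mult_mat_vec[OF adj_mat(1)[OF A] A v] by simp
  also have "\<dots> = det A \<cdot>\<^sub>v v" using adj_mat(3)[OF A] smult_one_mat_vec[OF v] by simp
  finally show ?thesis .
qed

lemma A_adjcol:
  fixes A :: "'a :: comm_ring_1 mat"
  assumes A: "A \<in> carrier_mat N N" and n: "n < N"
  shows "A *\<^sub>v col (adj_mat A) n = det A \<cdot>\<^sub>v unit_vec N n"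
proof (rule eq_vecI)
  fix i assume "i < dim_vec (det A \<cdot>\<^sub>v unit_vec N n)"
  then have i: "i < N" by simp
  have "(A *\<^sub>v col (adj_mat A) n) $ i = (A * adj_mat A) $$ (i,n)"
    using i n A adj_mat(1)[OF A] by simp
  also have "\<dots> = (det A \<cdot>\<^sub>v unit_vec N n) $ i"
    using adj_mat(2)[OF A] i n by simp
  finally show "(A *\<^sub>v col (adj_mat A) n) $ i = (det A \<cdot>\<^sub>v unit_vec N n) $ i" .
qed (use A adj_mat(1)[OF A] in simp)

lemma adj_unit:
  fixes A :: "'a :: comm_ring_1 mat"
  assumes A: "A \<in> carrier_mat N N" and n: "n < N"
  shows "(adj_mat A *\<^sub>v (c \<cdot>\<^sub>v unit_vec N n)) $ n = c * cofactor A n n"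
  using A n adj_mat(1)[OF A] by (simp add: adj_mat_def scalar_prod_def unit_vec_def sum_ind2)

lemma Yr_pos: "Yr (real n) (real n) \<noteq> 0"
  by (simp add: Yr_def)

lemma det_step:
  assumes c: "cofactor (Amat p_sq n) n n = Y n n"
  shows "det (Amat p_sq n) = complex_of_real (fD (real n))"
proof -
  let ?A = "Amat p_sq n" and ?v = "vec (Suc n) (Y n)"
  have A: "?A \<in> carrier_mat (Suc n) (Suc n)" using Amat_carrier[of n] by simp
  have "(adj_mat ?A *\<^sub>v (?A *\<^sub>v ?v)) $ n = det ?A * Y n n"
    using adjv[OF A, of ?v] by simp
  moreover have "(adj_mat ?A *\<^sub>v (?A *\<^sub>v ?v)) $ n = complex_of_real (fD (real n)) * Y n n"
    unfolding Ay adj_unit[OF A lessI] c by simp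
  ultimately have "det ?A * Y n n = complex_of_real (fD (real n)) * Y n n" by metis
  moreover have "Y n n \<noteq> 0" using Yr_pos[of n] by (simp add: Y_def)
  ultimately show ?thesis by (metis mult_cancel_right)
qed

lemma dim_Amat[simp]: "dim_row (Amat p_sq n) = Suc n" "dim_col (Amat p_sq n) = Suc n"
  by (simp_all add: Amat_def)

lemma delete_last: "mat_delete (Amat p_sq (Suc m)) (Suc m) (Suc m) = Amat p_sq m"
proof (rule eq_matI)
  fix i j assume i: "i < dim_row (Amat p_sq m)" and j: "j < dim_col (Amat p_sq m)"
  have "mat_delete (Amat p_sq (Suc m)) (Suc m) (Suc m) $$ (i, j) = Amat p_sq (Suc m) $$ (i,j)"
    using i j by (simp add: mat_delete_def)
  also have "\<dots> = complex_of_real (er i j)" using i j by (simp add: Amat_entry)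
  also have "\<dots> = Amat p_sq m $$ (i,j)" using i j by (simp add: Amat_entry)
  finally show "mat_delete (Amat p_sq (Suc m)) (Suc m) (Suc m) $$ (i, j) = Amat p_sq m $$ (i,j)" .
qed (simp_all add: mat_delete_def)

lemma cof_last: "cofactor (Amat p_sq n) n n = Y n n"
proof (induction n)
  case 0
  have "mat_delete (Amat p_sq 0) 0 0 \<in> carrier_mat 0 0"
    using mat_delete_carrier[OF Amat_carrier[of 0]] by simp
  then show ?case by (simp add: cofactor_def Y_def Yr_def)
next
  case (Suc m)
  have "cofactor (Amat p_sq (Suc m)) (Suc m) (Suc m) = det (Amat p_sq m)"
    by (simp add: cofactor_def delete_last)
  also have "\<dots> = complex_of_real (fD (real m))" using det_step[OF Suc.IH] .
  also have "\<dots> = Y (Suc m) (Suc m)"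
    by (simp add: Y_def Yr_def fD_def field_simps power2_eq_square)
  finally show ?case .
qed

lemma detA: "det (Amat p_sq n) = complex_of_real (fD (real n))"
  using det_step[OF cof_last] .

lemma final_eq: "Y n k = complex_of_real (- (real ((n+2)*(n+3)) / 12) * real (k+1) * real (k+2) * (real k - real n - 1))"
proof -
  have "Yr (real n) (real k) = - (real ((n+2)*(n+3)) / 12) * real (k+1) * real (k+2) * (real k - real n - 1)"
    unfolding Yr_def by (simp only: of_nat_mult of_nat_add of_nat_numeral of_nat_1)
  then show ?thesis unfolding Y_def by simp
qed

lemma detA_nz: "det (Amat p_sq n) \<noteq> 0"
proof -
  have "fD (real n) > 0" unfolding fD_def by (intro divide_pos_pos mult_pos_pos) auto
  then show ?thesis unfolding detA by simp
qed

theorem lemma3p4: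
  fixes n k :: nat
  assumes "k \<le> n"
  shows "cofactor (Amat p_sq n) n k =
    complex_of_real (- (real ((n+2)*(n+3)) / 12) * real (k+1) * real (k+2) * (real k - real n - 1))"
proof -
  let ?A = "Amat p_sq n" and ?y = "vec (Suc n) (Y n)" and ?x = "col (adj_mat (Amat p_sq n)) n"
  have A: "?A \<in> carrier_mat (Suc n) (Suc n)" using Amat_carrier[of n] by simp
  have x: "?x \<in> carrier_vec (Suc n)" by (rule col_carrier_vec[OF lessI adj_mat(1)[OF A]])
  have y: "?y \<in> carrier_vec (Suc n)" by (rule vec_carrier)
  have "?A *\<^sub>v ?x = det ?A \<cdot>\<^sub>v unit_vec (Suc n) n" by (rule A_adjcol[OF A lessI])
  also have "\<dots> = complex_of_real (fD (real n)) \<cdot>\<^sub>v unit_vec (Suc n) n" by (simp only: detA)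
  also have "\<dots> = ?A *\<^sub>v ?y" by (rule Ay[symmetric])
  finally have Axy: "?A *\<^sub>v ?x = ?A *\<^sub>v ?y" .
  have "det ?A \<cdot>\<^sub>v ?x = adj_mat ?A *\<^sub>v (?A *\<^sub>v ?x)" by (rule adjv[OF A x, symmetric])
  also have "\<dots> = adj_mat ?A *\<^sub>v (?A *\<^sub>v ?y)" by (simp only: Axy)
  also have "\<dots> = det ?A \<cdot>\<^sub>v ?y" by (rule adjv[OF A y])
  finally have "(det ?A \<cdot>\<^sub>v ?x) $ k = (det ?A \<cdot>\<^sub>v ?y) $ k" by (rule arg_cong[where f="\<lambda>v. v $ k"])
  moreover have kx: "k < dim_vec ?x" using carrier_vecD[OF x] assms by linarith
  moreover have ky: "k < dim_vec ?y" using assms by simp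
  ultimately have "det ?A * ?x $ k = det ?A * ?y $ k" by (simp only: index_smult_vec(1))
  then have xy: "?x $ k = ?y $ k" using detA_nz[of n] by (rule mult_left_cancel[THEN iffD1, rotated])
  have dr: "dim_row (adj_mat ?A) = Suc n" "dim_col (adj_mat ?A) = Suc n"
    using adj_mat(1)[OF A] by (simp_all add: carrier_matD)
  have "cofactor ?A n k = adj_mat ?A $$ (k, n)"
    unfolding adj_mat_def using assms by simp
  also have "\<dots> = ?x $ k"
    by (rule index_col[symmetric]) (use assms dr in simp_all)
  also have "\<dots> = Y n k" using xy assms by simp
  also have "\<dots> = complex_of_real (- (real ((n+2)*(n+3)) / 12) * real (k+1) * real (k+2) * (real k - real n - 1))"
    by (rule final_eq)
  finally show ?thesis .
qed

end
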